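(* Consider an HTSP instance in which all speeds are powers of two, and let $M>0$ be at least its optimal makespan. Then for every level $\ell\ge0$, $\mathrm{MST}(G/V_{<\ell})\le M\sum_{j\ge \ell-1}2^j\mu_j$.
   Context: HTSP: the input is a finite metric space $(V,d)$, a depot $r\in V$, and $k$ vehicles with speeds $\lambda_1,\dots,\lambda_k\ge1$. A solution is a collection of tours, each starting and ending at $r$, that cover $V$. Its makespan is $\max_i d(\tau_i)/\lambda_i$. Here all speeds are powers of two, $\mu_j$ is the number of vehicles of speed $2^j$, and $\mu_{-1}=0$. Levels relative to $M$: $V_0=\{u:d(r,u)\le M\}$, and for $i\ge1$, $V_i=\{u:2^{i-1}M<d(r,u)\le2^iM\}$. Also $V_{<\ell}=\bigcup_{j<\ell}V_j$, with $V_{<0}=\emptyset$. $G$ is the complete graph on $V$ weighted by $d$. $G/U$ contracts $U$ to a single vertex, keeping parallel edges. $\mathrm{MST}$ denotes the minimum spanning tree weight. *)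

theory Defs
  imports Main "HOL-Library.Disjoint_Sets" Complex_Main
begin

definition metric_on :: "'a set \<Rightarrow> ('a \<Rightarrow> 'a \<Rightarrow> real) \<Rightarrow> bool" where
  "metric_on V d \<longleftrightarrow> finite V \<and>
     (\<forall>x\<in>V. d x x = 0) \<and>
     (\<forall>x\<in>V. \<forall>y\<in>V. x \<noteq> y \<longrightarrow> d x y > 0) \<and>
     (\<forall>x\<in>V. \<forall>y\<in>V. d x y = d y x) \<and>
     (\<forall>x\<in>V. \<forall>y\<in>V. \<forall>z\<in>V. d x z \<le> d x y + d y z)"

definition is_tour :: "'a set \<Rightarrow> 'a \<Rightarrow> 'a list \<Rightarrow> bool" where
  "is_tour V r t \<longleftrightarrow> t \<noteq> [] \<and> hd t = r \<and> last t = r \<and> set t \<subseteq> V"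

definition tour_len :: "('a \<Rightarrow> 'a \<Rightarrow> real) \<Rightarrow> 'a list \<Rightarrow> real" where
  "tour_len d t = (\<Sum>i< length t - 1. d (t ! i) (t ! Suc i))"

definition is_solution :: "'a set \<Rightarrow> 'a \<Rightarrow> nat \<Rightarrow> (nat \<Rightarrow> 'a list) \<Rightarrow> bool" where
  "is_solution V r k \<tau> \<longleftrightarrow> (\<forall>i<k. is_tour V r (\<tau> i)) \<and> V \<subseteq> (\<Union>i<k. set (\<tau> i))"

definition makespan :: "('a \<Rightarrow> 'a \<Rightarrow> real) \<Rightarrow> nat \<Rightarrow> (nat \<Rightarrow> real) \<Rightarrow> (nat \<Rightarrow> 'a list) \<Rightarrow> real" where
  "makespan d k spd \<tau> = Max ((\<lambda>i. tour_len d (\<tau> i) / spd i) ` {..<k})"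

definition opt_makespan :: "'a set \<Rightarrow> ('a \<Rightarrow> 'a \<Rightarrow> real) \<Rightarrow> 'a \<Rightarrow> nat \<Rightarrow> (nat \<Rightarrow> real) \<Rightarrow> real" where
  "opt_makespan V d r k spd = Inf {makespan d k spd \<tau> | \<tau>. is_solution V r k \<tau>}"

definition mu :: "nat \<Rightarrow> (nat \<Rightarrow> real) \<Rightarrow> nat \<Rightarrow> nat" where
  "mu k spd j = card {i. i < k \<and> spd i = 2 ^ j}"

definition level :: "'a set \<Rightarrow> ('a \<Rightarrow> 'a \<Rightarrow> real) \<Rightarrow> 'a \<Rightarrow> real \<Rightarrow> nat \<Rightarrow> 'a set" where
  "level V d r M i =
     (if i = 0 then {u\<in>V. d r u \<le> M}
      else {u\<in>V. 2 ^ (i - 1) * M < d r u \<and> d r u \<le> 2 ^ i * M})"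

definition levels_below :: "'a set \<Rightarrow> ('a \<Rightarrow> 'a \<Rightarrow> real) \<Rightarrow> 'a \<Rightarrow> real \<Rightarrow> nat \<Rightarrow> 'a set" where
  "levels_below V d r M l = (\<Union>j<l. level V d r M j)"

text \<open>The contracted graph G/U: vertices are the images of V under \<open>contr U\<close>
  (all of U becomes the single vertex None); its edges are the edges {a,b} of the
  complete graph G not lying inside U (edges inside U become loops, irrelevant
  for spanning trees), parallel edges kept. An edge {a,b} is encoded by one
  ordered pair (a,b); a set F of such pairs with card F = |W| - 1 that connects
  W cannot contain both orientations of the same edge, so these are exactly
  the spanning trees of G/U.\<close>
definition contr :: "'a set \<Rightarrow> 'a \<Rightarrow> 'a option" where
  "contr U x = (if x \<in> U then None else Some x)"

definition contr_edges :: "'a set \<Rightarrow> 'a set \<Rightarrow> ('a \<times> 'a) set" where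
  "contr_edges V U = {(a, b). a \<in> V \<and> b \<in> V \<and> a \<noteq> b \<and> \<not> (a \<in> U \<and> b \<in> U)}"

definition is_spanning_tree_contr :: "'a set \<Rightarrow> 'a set \<Rightarrow> ('a \<times> 'a) set \<Rightarrow> bool" where
  "is_spanning_tree_contr V U F \<longleftrightarrow>
     F \<subseteq> contr_edges V U \<and>
     card F + 1 = card (contr U ` V) \<and>
     (\<forall>x\<in>contr U ` V. \<forall>y\<in>contr U ` V.
        (x, y) \<in> ({(contr U a, contr U b) | a b. (a, b) \<in> F \<or> (b, a) \<in> F})\<^sup>*)"

definition MST_contr :: "'a set \<Rightarrow> ('a \<Rightarrow> 'a \<Rightarrow> real) \<Rightarrow> 'a set \<Rightarrow> real" where
  "MST_contr V d U = Min {(\<Sum>(a, b)\<in>F. d a b) | F. is_spanning_tree_contr V U F}"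

end

theory Submission imports Defs begin

definition relc :: "('a \<Rightarrow> 'b) \<Rightarrow> ('a \<times> 'a) set \<Rightarrow> ('b \<times> 'b) set" where
  "relc c F = {(c a, c b) | a b. (a, b) \<in> F \<or> (b, a) \<in> F}"

lemma relc_mono: "F \<subseteq> G \<Longrightarrow> relc c F \<subseteq> relc c G"
  unfolding relc_def by blast

lemma relc_sym: "sym (relc c F)"
  unfolding relc_def sym_def by blast

lemma crossing:
  assumes "(x, y) \<in> R\<^sup>*" "x \<in> S" "y \<notin> S"
  shows "\<exists>u w. (u, w) \<in> R \<and> u \<in> S \<and> w \<notin> S \<and> (x, w) \<in> R\<^sup>*"
  using assms
proof (induction rule: rtrancl_induct)
  case base then show ?case by simp
next
  case (step y z)
  show ?case
  proof (cases "y \<in> S")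
    case True then show ?thesis using step by (meson rtrancl.rtrancl_into_rtrancl)
  next
    case False then show ?thesis using step by blast
  qed
qed

lemma prim_aux:
  fixes c :: "'a \<Rightarrow> 'b"
  assumes fW: "finite Wv" and fE: "finite E" and rW: "rt \<in> Wv"
    and EW: "\<forall>(a,b)\<in>E. c a \<in> Wv \<and> c b \<in> Wv"
    and conn: "\<forall>x\<in>Wv. (rt, x) \<in> (relc c E)\<^sup>*"
  shows "n < card Wv \<Longrightarrow> \<exists>S F. S \<subseteq> Wv \<and> rt \<in> S \<and> card S = n + 1 \<and> F \<subseteq> E \<and> card F = n
     \<and> (\<forall>(a,b)\<in>F. c a \<in> S \<and> c b \<in> S) \<and> (\<forall>x\<in>S. (rt, x) \<in> (relc c F)\<^sup>*)"
proof (induction n)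
  case 0
  show ?case by (rule exI[of _ "{rt}"], rule exI[of _ "{}"]) (use rW in auto)
next
  case (Suc n)
  then obtain S F where S: "S \<subseteq> Wv" "rt \<in> S" "card S = n + 1" "F \<subseteq> E" "card F = n"
     "\<forall>(a,b)\<in>F. c a \<in> S \<and> c b \<in> S" "\<forall>x\<in>S. (rt, x) \<in> (relc c F)\<^sup>*" by auto
  have fS: "finite S" using S(1) fW finite_subset by blast
  have "S \<noteq> Wv" using S(3) Suc.prems by auto
  then obtain y where y: "y \<in> Wv" "y \<notin> S" using S(1) by blast
  obtain u w where uw: "(u, w) \<in> relc c E" "u \<in> S" "w \<notin> S"
    using crossing[OF conn[rule_format, OF y(1)] S(2) y(2)] by blast
  then obtain a b where ab: "u = c a" "w = c b" "(a, b) \<in> E \<or> (b, a) \<in> E"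
    unfolding relc_def by blast
  obtain e where e: "e \<in> E" "e = (a,b) \<or> e = (b,a)" using ab(3) by blast
  have eF: "e \<notin> F" using S(6) e(2) ab uw(3) by auto
  have wW: "w \<in> Wv" using EW e ab by auto
  have fF: "finite F" using S(4) fE finite_subset by blast
  have relw: "(u, w) \<in> relc c (insert e F)" using e ab unfolding relc_def by blast
  have sub: "relc c F \<subseteq> relc c (insert e F)" by (rule relc_mono) auto
  show ?case
  proof (rule exI[of _ "insert w S"], rule exI[of _ "insert e F"], intro conjI)
    show "insert w S \<subseteq> Wv" using S(1) wW by auto
    show "rt \<in> insert w S" using S(2) by auto
    show "card (insert w S) = Suc n + 1" using fS uw(3) S(3) by simp
    show "insert e F \<subseteq> E" using S(4) e(1) by auto
    show "card (insert e F) = Suc n" using fF eF S(5) by simp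
    show "\<forall>(a, b)\<in>insert e F. c a \<in> insert w S \<and> c b \<in> insert w S"
      using S(6) e(2) ab uw(2) by auto
    show "\<forall>x\<in>insert w S. (rt, x) \<in> (relc c (insert e F))\<^sup>*"
    proof
      fix x assume "x \<in> insert w S"
      moreover have "\<forall>x\<in>S. (rt, x) \<in> (relc c (insert e F))\<^sup>*"
        using S(7) rtrancl_mono[OF sub] by blast
      moreover have "(rt, w) \<in> (relc c (insert e F))\<^sup>*"
        using calculation(2) uw(2) relw by (meson rtrancl.rtrancl_into_rtrancl)
      ultimately show "(rt, x) \<in> (relc c (insert e F))\<^sup>*" by blast
    qed
  qed
qed

lemma prim:
  fixes c :: "'a \<Rightarrow> 'b"
  assumes fW: "finite Wv" and fE: "finite E" and rW: "rt \<in> Wv"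
    and EW: "\<forall>(a,b)\<in>E. c a \<in> Wv \<and> c b \<in> Wv"
    and conn: "\<forall>x\<in>Wv. (rt, x) \<in> (relc c E)\<^sup>*"
  shows "\<exists>F. F \<subseteq> E \<and> card F + 1 = card Wv \<and> (\<forall>x\<in>Wv. \<forall>y\<in>Wv. (x, y) \<in> (relc c F)\<^sup>*)"
proof -
  have "card Wv > 0" using rW fW card_gt_0_iff by blast
  then have cW: "card Wv - 1 < card Wv" by simp
  obtain S F where S: "S \<subseteq> Wv" "rt \<in> S" "card S = card Wv - 1 + 1" "F \<subseteq> E" "card F = card Wv - 1"
     "\<forall>(a,b)\<in>F. c a \<in> S \<and> c b \<in> S" "\<forall>x\<in>S. (rt, x) \<in> (relc c F)\<^sup>*"
    using prim_aux[OF assms cW] by (elim exE conjE) (rule that; assumption)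
  have "S = Wv" proof (rule card_subset_eq[OF fW S(1)])
    show "card S = card Wv" using S(3) cW by linarith
  qed
  have sy: "sym ((relc c F)\<^sup>*)" by (rule sym_rtrancl[OF relc_sym])
  have "\<forall>x\<in>Wv. \<forall>y\<in>Wv. (x, y) \<in> (relc c F)\<^sup>*"
  proof (intro ballI)
    fix x y assume "x \<in> Wv" "y \<in> Wv"
    then have "(rt, x) \<in> (relc c F)\<^sup>*" "(rt, y) \<in> (relc c F)\<^sup>*" using S(7) \<open>S = Wv\<close> by auto
    then have "(x, rt) \<in> (relc c F)\<^sup>*" using sy by (simp add: symD)
    then show "(x, y) \<in> (relc c F)\<^sup>*" using \<open>(rt, y) \<in> _\<close> by (rule rtrancl_trans)
  qed
  moreover have "card F + 1 = card Wv" using S(5) cW by linarith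
  ultimately show ?thesis using S(4) by blast
qed


lemma d_nonneg:
  assumes "metric_on V d" "x \<in> V" "y \<in> V" shows "0 \<le> d x y"
  using assms unfolding metric_on_def by (cases "x = y") (auto intro: less_imp_le)

lemma dist_path:
  assumes m: "metric_on V d" and tV: "set t \<subseteq> V"
  shows "p \<le> q \<Longrightarrow> q < length t \<Longrightarrow> d (t!p) (t!q) \<le> (\<Sum>i\<in>{p..<q}. d (t!i) (t!Suc i))"
proof (induction q)
  case 0
  then have "t!0 \<in> V" using tV by auto
  then show ?case using 0 m unfolding metric_on_def by simp
next
  case (Suc q)
  show ?case
  proof (cases "p = Suc q")
    case True
    then have "t!p \<in> V" using tV Suc.prems by auto
    then show ?thesis using True m unfolding metric_on_def by simp
  next
    case False
    then have pq: "p \<le> q" using Suc.prems by simp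
    have V3: "t!p \<in> V" "t!q \<in> V" "t!Suc q \<in> V" using tV Suc.prems pq by auto
    have "d (t!p) (t!Suc q) \<le> d (t!p) (t!q) + d (t!q) (t!Suc q)"
      using m V3 unfolding metric_on_def by blast
    also have "\<dots> \<le> (\<Sum>i\<in>{p..<q}. d (t!i) (t!Suc i)) + d (t!q) (t!Suc q)"
      using Suc.IH pq Suc.prems by simp
    also have "\<dots> = (\<Sum>i\<in>{p..<Suc q}. d (t!i) (t!Suc i))" using pq by simp
    finally show ?thesis .
  qed
qed

lemma radius:
  assumes m: "metric_on V d" and t: "is_tour V r t" and p: "p < length t"
  shows "2 * d r (t!p) \<le> tour_len d t"
proof -
  have tV: "set t \<subseteq> V" and ne: "t \<noteq> []" and h: "t!0 = r" and l: "t!(length t - 1) = r"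
    using t unfolding is_tour_def by (auto simp: hd_conv_nth last_conv_nth)
  have pl: "p \<le> length t - 1" using p by simp
  have a: "d (t!0) (t!p) \<le> (\<Sum>i\<in>{0..<p}. d (t!i) (t!Suc i))"
    using dist_path[OF m tV, of 0 p] p by simp
  have b: "d (t!p) (t!(length t - 1)) \<le> (\<Sum>i\<in>{p..<length t - 1}. d (t!i) (t!Suc i))"
    using dist_path[OF m tV pl] ne by simp
  have rV: "r \<in> V" "t!p \<in> V" using tV ne h p nth_mem by (metis nth_mem length_greater_0_conv subsetD)+
  have sym: "d (t!p) r = d r (t!p)" using m rV unfolding metric_on_def by auto
  have "tour_len d t = (\<Sum>i\<in>{0..<p}. d (t!i) (t!Suc i)) + (\<Sum>i\<in>{p..<length t - 1}. d (t!i) (t!Suc i))"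
    unfolding tour_len_def using sum.atLeastLessThan_concat[OF _ pl, of 0, symmetric] by (simp add: atLeast0LessThan)
  then show ?thesis using a b h l sym by simp
qed

lemma tour_path:
  assumes "\<forall>p. Suc p < length t \<longrightarrow> c (t!p) = c (t!Suc p) \<or> (t!p, t!Suc p) \<in> E"
  shows "p < length t \<Longrightarrow> (c (t!0), c (t!p)) \<in> (relc c E)\<^sup>*"
proof (induction p)
  case 0 then show ?case by simp
next
  case (Suc p)
  then have IH: "(c (t!0), c (t!p)) \<in> (relc c E)\<^sup>*" by simp
  from assms Suc.prems have "c (t!p) = c (t!Suc p) \<or> (t!p, t!Suc p) \<in> E" by blast
  then show ?case
  proof
    assume "c (t!p) = c (t!Suc p)" then show ?thesis using IH by simp
  next
    assume "(t!p, t!Suc p) \<in> E"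
    then have "(c (t!p), c (t!Suc p)) \<in> relc c E" unfolding relc_def by blast
    with IH show ?thesis by (rule rtrancl_into_rtrancl)
  qed
qed

lemma level_cover:
  assumes "v \<in> V" "d r v \<le> 2^n * M"
  shows "\<exists>j\<le>n. v \<in> level V d r M j"
  using assms(2)
proof (induction n)
  case 0 then show ?case using assms(1) by (auto simp: level_def)
next
  case (Suc n)
  show ?case
  proof (cases "d r v \<le> 2^n * M")
    case True then show ?thesis using Suc.IH le_Suc_eq by blast
  next
    case False then have "v \<in> level V d r M (Suc n)" using Suc.prems assms(1) by (auto simp: level_def)
    then show ?thesis by blast
  qed
qed

lemma outside_far:
  assumes "v \<in> V" "v \<notin> levels_below V d r M l" "l \<ge> 1"
  shows "2^(l-1) * M < d r v"
proof (rule ccontr)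
  assume "\<not> ?thesis"
  then obtain j where "j \<le> l - 1" "v \<in> level V d r M j" using level_cover[OF assms(1)] by (meson not_less)
  then show False using assms(2,3) unfolding levels_below_def by auto
qed

lemma lim_aux:
  fixes x M S :: real
  assumes "M > 0" "S \<ge> 0" "\<forall>M'. M < M' \<and> M' < 2*M \<longrightarrow> x \<le> M' * S"
  shows "x \<le> M * S"
proof (rule ccontr)
  assume "\<not> x \<le> M * S"
  then have xs: "x > M * S" by simp
  show False
  proof (cases "S = 0")
    case True then show False using assms(3)[rule_format, of "3/2*M"] xs assms(1) by simp
  next
    case False
    then have Sp: "S > 0" using assms(2) by simp
    define e where "e = min (M/2) ((x - M*S)/(2*S))"
    have e: "e > 0" "e \<le> M/2" "e \<le> (x - M*S)/(2*S)" using assms(1) xs Sp unfolding e_def by auto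
    have "x \<le> (M + e) * S" using assms(3)[rule_format, of "M + e"] e assms(1) by simp
    moreover have "e * S \<le> (x - M*S)/2" using e(3) Sp by (simp add: field_simps)
    ultimately show False using xs by (simp add: algebra_simps)
  qed
qed


lemma pow2_inj: "(2::real)^a = 2^b \<longleftrightarrow> a = b" by simp
lemma pow2_le: "(2::real)^a \<le> 2^b \<longleftrightarrow> a \<le> b" by simp

lemma regroup:
  assumes sp: "\<forall>i<k. \<exists>j::nat. spd i = 2^j"
  shows "(\<Sum>i\<in>{i. i<k \<and> 2^(l-1) \<le> spd i}. spd i)
       = (\<Sum>j | l - 1 \<le> j \<and> mu k spd j \<noteq> 0. 2 ^ j * real (mu k spd j))"
proof -
  define g where "g i = (SOME j::nat. spd i = 2^j)" for i
  have g: "spd i = 2^(g i)" if "i < k" for i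
    using sp that unfolding g_def by (metis (mono_tags) someI_ex)
  define I where "I = {i. i<k \<and> 2^(l-1) \<le> spd i}"
  define J where "J = {j. l - 1 \<le> j \<and> mu k spd j \<noteq> 0}"
  have fI: "finite I" unfolding I_def by simp
  have JS: "J \<subseteq> g ` {..<k}"
  proof
    fix j assume "j \<in> J"
    then have "card {i. i < k \<and> spd i = 2 ^ j} \<noteq> 0" unfolding J_def mu_def by simp
    then obtain i where "i < k" "spd i = 2^j" by (metis (mono_tags, lifting) card.empty empty_Collect_eq)
    then have "g i = j" using g[of i] pow2_inj by metis
    then show "j \<in> g ` {..<k}" using \<open>i<k\<close> by blast
  qed
  have fJ: "finite J" using finite_subset[OF JS] by simp
  have gIJ: "g ` I \<subseteq> J"
  proof
    fix x assume "x \<in> g ` I"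
    then obtain i where i: "i \<in> I" "x = g i" by blast
    then have ik: "i < k" and le: "2^(l-1) \<le> spd i" unfolding I_def by auto
    have "(2::real)^(l-1) \<le> 2^(g i)" using le g[OF ik] by simp
    then have "l - 1 \<le> g i" using pow2_le by blast
    moreover have "card {y. y < k \<and> spd y = 2 ^ g i} \<noteq> 0"
    proof -
      have "i \<in> {y. y < k \<and> spd y = 2 ^ g i}" using ik g by simp
      then show ?thesis by (metis card_0_eq empty_iff finite_Collect_conjI finite_Collect_less_nat)
    qed
    ultimately show "x \<in> J" using i(2) unfolding J_def mu_def by blast
  qed
  have "(\<Sum>i\<in>I. spd i) = (\<Sum>j\<in>J. \<Sum>i\<in>{x. x \<in> I \<and> g x = j}. spd i)"
    using sum.group[OF fI fJ gIJ, of spd] by simp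
  also have "\<dots> = (\<Sum>j\<in>J. 2^j * real (mu k spd j))"
  proof (rule sum.cong[OF refl])
    fix j assume jJ: "j \<in> J"
    have eq: "{x. x \<in> I \<and> g x = j} = {i. i < k \<and> spd i = 2^j}"
    proof (intro set_eqI iffI)
      fix x assume "x \<in> {x. x \<in> I \<and> g x = j}"
      then show "x \<in> {i. i < k \<and> spd i = 2^j}" using g unfolding I_def by auto
    next
      fix x assume x: "x \<in> {i. i < k \<and> spd i = 2^j}"
      then have "g x = j" using g[of x] pow2_inj by auto
      moreover have "l - 1 \<le> j" using jJ unfolding J_def by simp
      then have "(2::real)^(l-1) \<le> 2^j" using pow2_le by blast
      ultimately show "x \<in> {x. x \<in> I \<and> g x = j}" using x unfolding I_def by auto
    qed
    show "(\<Sum>i\<in>{x. x \<in> I \<and> g x = j}. spd i) = 2^j * real (mu k spd j)"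
      unfolding eq mu_def by simp
  qed
  finally show ?thesis unfolding I_def J_def .
qed


theorem lemma3:
  fixes V :: "'a set" and d :: "'a \<Rightarrow> 'a \<Rightarrow> real" and r :: 'a
    and k :: nat and spd :: "nat \<Rightarrow> real" and M :: real and l :: nat
  assumes "metric_on V d" and "r \<in> V" and "k \<ge> 1"
    and "\<forall>i<k. spd i \<ge> 1"
    and "\<forall>i<k. \<exists>j::nat. spd i = 2 ^ j"
    and "M > 0"
    and "opt_makespan V d r k spd \<le> M"
  shows "MST_contr V d (levels_below V d r M l)
           \<le> M * (\<Sum>j | l - 1 \<le> j \<and> mu k spd j \<noteq> 0. 2 ^ j * real (mu k spd j))"
proof -
  note m = assms(1)
  define U where "U = levels_below V d r M l"
  define S where "S = (\<Sum>j | l - 1 \<le> j \<and> mu k spd j \<noteq> 0. 2 ^ j * real (mu k spd j))"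
  have S0: "S \<ge> 0" unfolding S_def by (intro sum_nonneg) simp
  have fV: "finite V" using m unfolding metric_on_def by simp
  have UV: "U \<subseteq> V" unfolding U_def levels_below_def level_def by auto
  have rU: "r \<in> U" if "l \<ge> 1"
  proof -
    have "d r r = 0" using m assms(2) unfolding metric_on_def by simp
    then have "r \<in> level V d r M 0" using assms(2,6) unfolding level_def by simp
    then show ?thesis using that unfolding U_def levels_below_def by force
  qed
  have U0: "U = {}" if "l = 0" using that unfolding U_def levels_below_def by simp
  define X where "X = {makespan d k spd \<tau> | \<tau>. is_solution V r k \<tau>}"
  have Xne: "X \<noteq> {}"
  proof -
    obtain xs where xs: "set xs = V" using finite_list[OF fV] by blast
    define \<tau>0 where "\<tau>0 = (\<lambda>_::nat. r # xs @ [r])"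
    have "is_solution V r k \<tau>0"
      unfolding is_solution_def is_tour_def \<tau>0_def using xs assms(2,3) by (auto simp: lessThan_empty_iff)
    then show ?thesis unfolding X_def by blast
  qed
  have main: "\<forall>M'. M < M' \<and> M' < 2*M \<longrightarrow> MST_contr V d U \<le> M' * S"
  proof (intro allI impI)
    fix M' assume M': "M < M' \<and> M' < 2*M"
    have "Inf X < M'" using assms(7) M' unfolding opt_makespan_def X_def by simp
    then obtain x where "x \<in> X" "x < M'" using cInf_lessD[OF Xne] by blast
    then obtain \<tau> where sol: "is_solution V r k \<tau>" and ms: "makespan d k spd \<tau> < M'"
      unfolding X_def by blast
    have tours: "\<And>i. i < k \<Longrightarrow> is_tour V r (\<tau> i)" and cover: "V \<subseteq> (\<Union>i<k. set (\<tau> i))"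
      using sol unfolding is_solution_def by auto
    have spos: "\<And>i. i < k \<Longrightarrow> spd i > 0" using assms(4) by force
    have tl: "tour_len d (\<tau> i) < spd i * M'" if "i < k" for i
    proof -
      have "tour_len d (\<tau> i) / spd i \<le> makespan d k spd \<tau>"
        unfolding makespan_def using that by (intro Max_ge) auto
      then have "tour_len d (\<tau> i) / spd i < M'" using ms by simp
      then show ?thesis using spos[OF that] by (simp add: pos_divide_less_eq mult.commute)
    qed
    define I where "I = {i. i<k \<and> 2^(l-1) \<le> spd i}"
    define P where "P = {(i,p). i \<in> I \<and> p < length (\<tau> i) - 1 \<and> \<tau> i ! p \<noteq> \<tau> i ! Suc p
                          \<and> \<not> (\<tau> i ! p \<in> U \<and> \<tau> i ! Suc p \<in> U)}"
    define f where "f = (\<lambda>(i,p). (\<tau> i ! p, \<tau> i ! Suc p))"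
    define E where "E = f ` P"
    define Sg where "Sg = Sigma I (\<lambda>i. {..<length (\<tau> i) - 1})"
    have fI: "finite I" unfolding I_def by simp
    have PSg: "P \<subseteq> Sg" unfolding P_def Sg_def by auto
    have fSg: "finite Sg" unfolding Sg_def using fI by auto
    have fP: "finite P" using finite_subset[OF PSg fSg] .
    have fE: "finite E" unfolding E_def using fP by simp
    have inV: "\<tau> i ! p \<in> V" if "i \<in> I" "p < length (\<tau> i)" for i p
    proof -
      have "i < k" using that unfolding I_def by simp
      then have "set (\<tau> i) \<subseteq> V" using tours unfolding is_tour_def by blast
      then show ?thesis using that(2) by (meson nth_mem subsetD)
    qed
    have EC: "E \<subseteq> contr_edges V U"
    proof
      fix e assume "e \<in> E"
      then obtain i p where ip: "(i,p) \<in> P" "e = (\<tau> i ! p, \<tau> i ! Suc p)" unfolding E_def f_def by auto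
      then have "i \<in> I" "p < length (\<tau> i)" "Suc p < length (\<tau> i)" unfolding P_def by auto
      then show "e \<in> contr_edges V U" using ip inV unfolding contr_edges_def P_def by auto
    qed
    define c where "c = contr U"
    define Wv where "Wv = c ` V"
    have fW: "finite Wv" unfolding Wv_def using fV by simp
    have rW: "c r \<in> Wv" unfolding Wv_def using assms(2) by simp
    have EW: "\<forall>(a,b)\<in>E. c a \<in> Wv \<and> c b \<in> Wv" using EC unfolding contr_edges_def Wv_def by auto
    have conn: "\<forall>x\<in>Wv. (c r, x) \<in> (relc c E)\<^sup>*"
    proof
      fix x assume "x \<in> Wv"
      then obtain v where v: "v \<in> V" "x = c v" unfolding Wv_def by blast
      show "(c r, x) \<in> (relc c E)\<^sup>*"
      proof (cases "v \<in> U")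
        case True
        then have "l \<ge> 1" using U0 by (cases l) auto
        then have "r \<in> U" by (rule rU)
        then have "c v = c r" using True unfolding c_def contr_def by simp
        then show ?thesis using v by simp
      next
        case False
        obtain i where ik: "i < k" and vi: "v \<in> set (\<tau> i)" using cover v(1) by blast
        obtain p where p: "p < length (\<tau> i)" "\<tau> i ! p = v" using vi by (meson in_set_conv_nth)
        have iI: "i \<in> I"
        proof (cases "l = 0")
          case True then show ?thesis unfolding I_def using ik assms(4) by simp
        next
          case False
          then have far: "2^(l-1) * M < d r v" using outside_far[OF v(1)] \<open>v \<notin> U\<close> unfolding U_def by simp
          have "2 * d r v \<le> tour_len d (\<tau> i)" using radius[OF m tours[OF ik] p(1)] p(2) by simp
          also have "\<dots> < spd i * M'" by (rule tl[OF ik])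
          also have "\<dots> < spd i * (2 * M)" using M' spos[OF ik] by simp
          finally have "2^(l-1) * M < spd i * M" using far by linarith
          then have "2^(l-1) < spd i" using assms(6) by simp
          then show ?thesis unfolding I_def using ik by simp
        qed
        have cond: "\<forall>q. Suc q < length (\<tau> i) \<longrightarrow> c (\<tau> i ! q) = c (\<tau> i ! Suc q) \<or> (\<tau> i ! q, \<tau> i ! Suc q) \<in> E"
        proof (intro allI impI)
          fix q assume q: "Suc q < length (\<tau> i)"
          show "c (\<tau> i ! q) = c (\<tau> i ! Suc q) \<or> (\<tau> i ! q, \<tau> i ! Suc q) \<in> E"
          proof (cases "\<tau> i ! q = \<tau> i ! Suc q \<or> (\<tau> i ! q \<in> U \<and> \<tau> i ! Suc q \<in> U)")
            case True then show ?thesis unfolding c_def contr_def by auto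
          next
            case False
            then have "(i,q) \<in> P" unfolding P_def using iI q by auto
            then have "f (i,q) \<in> E" unfolding E_def by blast
            then show ?thesis unfolding f_def by simp
          qed
        qed
        have h: "\<tau> i ! 0 = r" using tours[OF ik] unfolding is_tour_def by (metis hd_conv_nth)
        show ?thesis using tour_path[OF cond p(1)] h p(2) v(2) by simp
      qed
    qed
    obtain F where F: "F \<subseteq> E" "card F + 1 = card Wv" "\<forall>x\<in>Wv. \<forall>y\<in>Wv. (x, y) \<in> (relc c F)\<^sup>*"
      using prim[OF fW fE rW EW conn] by blast
    have st: "is_spanning_tree_contr V U F"
      unfolding is_spanning_tree_contr_def using F EC unfolding Wv_def c_def relc_def by blast
    have fCE: "finite (contr_edges V U)"
      by (rule finite_subset[of _ "V \<times> V"]) (use fV in \<open>auto simp: contr_edges_def\<close>)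
    have "MST_contr V d U \<le> (\<Sum>(a, b)\<in>F. d a b)"
      unfolding MST_contr_def
    proof (rule Min_le)
      have "{(\<Sum>(a, b)\<in>F. d a b) | F. is_spanning_tree_contr V U F}
            \<subseteq> (\<lambda>F. \<Sum>(a, b)\<in>F. d a b) ` Pow (contr_edges V U)"
        unfolding is_spanning_tree_contr_def by blast
      then show "finite {(\<Sum>(a, b)\<in>F. d a b) | F. is_spanning_tree_contr V U F}"
        using finite_subset fCE by blast
      show "(\<Sum>(a, b)\<in>F. d a b) \<in> {(\<Sum>(a, b)\<in>F. d a b) | F. is_spanning_tree_contr V U F}"
        using st by blast
    qed
    also have "\<dots> \<le> (\<Sum>(a, b)\<in>E. d a b)"
    proof (rule sum_mono2[OF fE F(1)])
      fix e assume "e \<in> E - F"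
      then have "e \<in> contr_edges V U" using EC by blast
      then show "0 \<le> (case e of (a, b) \<Rightarrow> d a b)" using d_nonneg[OF m] unfolding contr_edges_def by auto
    qed
    also have "\<dots> \<le> sum ((\<lambda>(a, b). d a b) \<circ> f) P"
      unfolding E_def
    proof (rule sum_image_le[OF fP])
      fix x assume "x \<in> P"
      then have "f x \<in> E" unfolding E_def by blast
      then have "f x \<in> contr_edges V U" using EC by blast
      then show "0 \<le> (case f x of (a, b) \<Rightarrow> d a b)" using d_nonneg[OF m] unfolding contr_edges_def by auto
    qed
    also have "\<dots> \<le> sum ((\<lambda>(a, b). d a b) \<circ> f) Sg"
    proof (rule sum_mono2[OF fSg PSg])
      fix x assume "x \<in> Sg - P"
      then obtain i p where x: "x = (i,p)" "i \<in> I" "p < length (\<tau> i) - 1" unfolding Sg_def by auto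
      then show "0 \<le> ((\<lambda>(a, b). d a b) \<circ> f) x" using d_nonneg[OF m] inV unfolding f_def by simp
    qed
    also have "\<dots> = (\<Sum>(i,p)\<in>Sg. d (\<tau> i ! p) (\<tau> i ! Suc p))"
      by (rule sum.cong) (auto simp: f_def)
    also have "\<dots> = (\<Sum>i\<in>I. tour_len d (\<tau> i))"
      unfolding Sg_def tour_len_def
      using sum.Sigma[OF fI, of "\<lambda>i. {..<length (\<tau> i) - 1}" "\<lambda>i p. d (\<tau> i ! p) (\<tau> i ! Suc p)"] by simp
    also have "\<dots> \<le> (\<Sum>i\<in>I. spd i * M')"
      by (rule sum_mono) (use tl in \<open>auto simp: I_def less_imp_le\<close>)
    also have "\<dots> = M' * (\<Sum>i\<in>I. spd i)" by (simp add: sum_distrib_left mult.commute)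
    also have "\<dots> = M' * S" unfolding I_def S_def using regroup[OF assms(5)] by simp
    finally show "MST_contr V d U \<le> M' * S" .
  qed
  show ?thesis using lim_aux[OF assms(6) S0 main] unfolding U_def S_def .
qed

end
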